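(* Let $G$ be a finite simple undirected graph with adjacency matrix $A=\sum_{r=0}^d\theta_rE_r$ (spectral decomposition), and let $a,b$ be vertices. Let $w_1,\dots,w_k$ and integers $f^r_\ell$ be as in the context, so that $\theta_r=\sum_{\ell=1}^k f^r_\ell w_\ell$, and define $F:\mathbb{T}^k\to\mathbb{C}$ by $F(\overline{z})=\sum_{r=0}^d\langle a|E_r|b\rangle\,e^{\mathrm{i} f^r(\overline{z})}$. Then \[\sup_{t\ge 0}\big|\exp(\mathrm{i}tA)_{a,b}\big| = \lim_{m\to\infty}\left(\frac{1}{(2\pi)^k}\int_{\mathbb{T}^k}|F(\overline{z})|^m\,\mathrm{d}\overline{z}\right)^{1/m}.\]
   Context: Here $\theta_0,\dots,\theta_d$ are the distinct eigenvalues of $A$ and $E_r$ is the orthogonal projection onto the $\theta_r$-eigenspace. Fix real numbers $w_1,\dots,w_k$ that are linearly independent over $\mathbb{Q}$ and such that every $\theta_r$ is an integer linear combination $\theta_r=\sum_{\ell=1}^k f^r_\ell w_\ell$ with $f^r_\ell\in\mathbb{Z}$ (such a basis can be computed from an exact factorization of the characteristic polynomial over its splitting field via the Smith normal form). For $\overline{z}=(z_1,\dots,z_k)$ write $f^r(\overline{z})=\sum_{\ell=1}^k f^r_\ell z_\ell$. $\mathbb{T}^k=\mathbb{R}^k/2\pi\mathbb{Z}^k$ is the $k$-torus with Lebesgue measure $\mathrm{d}\overline{z}$. *)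

theory Defs
  imports "HOL-Analysis.Analysis" "HOL-Probability.Probability"
begin

definition is_adjacency_matrix :: "real^'n^'n \<Rightarrow> bool" where
  "is_adjacency_matrix A \<longleftrightarrow>
     (\<forall>i j. A $ i $ j = 0 \<or> A $ i $ j = 1) \<and>
     (\<forall>i j. A $ i $ j = A $ j $ i) \<and> (\<forall>i. A $ i $ i = 0)"

definition is_spectral_decomposition ::
  "real^'n^'n \<Rightarrow> nat \<Rightarrow> (nat \<Rightarrow> real) \<Rightarrow> (nat \<Rightarrow> real^'n^'n) \<Rightarrow> bool" where
  "is_spectral_decomposition A d \<theta> E \<longleftrightarrow>
     inj_on \<theta> {0..d} \<and>
     (\<forall>r\<in>{0..d}. E r \<noteq> 0 \<and> transpose (E r) = E r \<and> E r ** E r = E r) \<and>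
     (\<forall>r\<in>{0..d}. \<forall>s\<in>{0..d}. r \<noteq> s \<longrightarrow> E r ** E s = 0) \<and>
     (\<Sum>r\<in>{0..d}. E r) = mat 1 \<and>
     A = (\<Sum>r\<in>{0..d}. \<theta> r *\<^sub>R E r)"

definition rat_lin_indep :: "nat \<Rightarrow> (nat \<Rightarrow> real) \<Rightarrow> bool" where
  "rat_lin_indep k w \<longleftrightarrow>
     (\<forall>c :: nat \<Rightarrow> rat. (\<Sum>l<k. of_rat (c l) * w l) = 0 \<longrightarrow> (\<forall>l<k. c l = 0))"

primrec cmat_pow :: "complex^'n^'n \<Rightarrow> nat \<Rightarrow> complex^'n^'n" where
  "cmat_pow M 0 = mat 1"
| "cmat_pow M (Suc n) = M ** cmat_pow M n"

definition cmat_exp :: "complex^'n^'n \<Rightarrow> complex^'n^'n" where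
  "cmat_exp M = (\<chi> i j. \<Sum>n. cmat_pow M n $ i $ j / of_nat (fact n))"

definition itA :: "real \<Rightarrow> real^'n^'n \<Rightarrow> complex^'n^'n" where
  "itA t A = (\<chi> i j. \<i> * complex_of_real t * complex_of_real (A $ i $ j))"

end

theory Submission
  imports Defs
begin


lemma exp_lip: "cmod (exp (\<i> * of_real x) - exp (\<i> * of_real y)) \<le> \<bar>x - y\<bar>"
proof -
  have "exp (\<i> * of_real x) - exp (\<i> * of_real y) = exp (\<i> * of_real y) * (exp (\<i> * of_real (x - y)) - 1)"
    by (simp add: algebra_simps flip: exp_add)
  hence "cmod (exp (\<i> * of_real x) - exp (\<i> * of_real y)) = cmod (exp (\<i> * of_real (x - y)) - 1)"
    by (simp add: norm_mult)
  also have "\<dots> = cmod (cis (x - y) - 1)" by (simp add: cis_conv_exp)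
  also have "\<dots> \<le> \<bar>x - y\<bar>"
  proof -
    let ?u = "x - y"
    have "(cmod (cis ?u - 1))^2 = (cos ?u - 1)^2 + (sin ?u)^2"
      by (simp add: cmod_def)
    also have "\<dots> = 2 - 2 * cos ?u" by (simp add: power2_eq_square algebra_simps sin_squared_eq)
    also have "\<dots> = 4 * (sin (?u/2))^2"
    proof -
      have e: "2 * (?u/2) = ?u" by simp
      have "cos ?u = cos (2 * (?u/2))" by (simp only: e)
      also have "\<dots> = 1 - 2 * (sin (?u/2))^2" by (rule cos_double_sin)
      finally show ?thesis by simp
    qed
    also have "\<dots> \<le> 4 * (?u/2)^2"
      using abs_sin_x_le_abs_x[of "?u/2"] by (metis abs_ge_zero power2_abs power_mono mult_left_mono zero_le_numeral)
    also have "\<dots> = ?u^2" by (simp add: power2_eq_square)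
    finally have "(cmod (cis ?u - 1))^2 \<le> \<bar>?u\<bar>^2" by simp
    then show ?thesis by (rule power2_le_imp_le) simp
  qed
  finally show ?thesis .
qed

lemma box_measure:
  assumes "0 \<le> \<delta>"
  shows "emeasure (PiM {..<k} (\<lambda>_. lborel)) (PiE {..<k} (\<lambda>l. {c l..<c l + \<delta>})) = ennreal (\<delta>^k)"
proof -
  interpret product_sigma_finite "\<lambda>_. lborel" by standard
  have "emeasure (PiM {..<k} (\<lambda>_. lborel)) (PiE {..<k} (\<lambda>l. {c l..<c l + \<delta>})) = (\<Prod>l<k. emeasure lborel {c l..<c l + \<delta>})"
    by (rule emeasure_PiM) auto
  also have "\<dots> = (\<Prod>l<k. ennreal \<delta>)" using assms by simp
  also have "\<dots> = ennreal (\<delta>^k)" using assms by (simp add: prod_ennreal ennreal_power)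
  finally show ?thesis .
qed

lemma pow_formula:
  assumes "is_spectral_decomposition A d \<theta> E"
  shows "cmat_pow (itA t A) n $ i $ j = (\<Sum>r\<in>{0..d}. (\<i> * of_real (t * \<theta> r))^n * of_real (E r $ i $ j))"
proof (induction n arbitrary: i j)
  case 0
  from assms have "(\<Sum>r\<in>{0..d}. E r) = mat 1" by (simp add: is_spectral_decomposition_def)
  hence "(\<Sum>r\<in>{0..d}. E r) $ i $ j = mat 1 $ i $ j" by simp
  hence "(\<Sum>r\<in>{0..d}. E r $ i $ j) = (if i = j then 1 else 0)"
    by (simp add: mat_def)
  hence "complex_of_real (\<Sum>r\<in>{0..d}. E r $ i $ j) = (if i = j then 1 else 0)"
    by simp
  hence "(\<Sum>r\<in>{0..d}. complex_of_real (E r $ i $ j)) = (if i = j then 1 else 0)"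
    by (simp add: of_real_sum)
  then show ?case by (simp add: mat_def)
next
  case (Suc n)
  let ?x = "\<lambda>r. \<i> * of_real (t * \<theta> r)"
  have orth: "(\<Sum>k\<in>UNIV. E s $ i $ k * E r $ k $ j) = (if s = r then E r $ i $ j else 0)"
    if "s \<in> {0..d}" "r \<in> {0..d}" for s r i j
  proof -
    have "(\<Sum>k\<in>UNIV. E s $ i $ k * E r $ k $ j) = (E s ** E r) $ i $ j"
      by (simp add: matrix_matrix_mult_def)
    then show ?thesis using assms that unfolding is_spectral_decomposition_def by auto
  qed
  have Aik: "itA t A $ i $ k = (\<Sum>s\<in>{0..d}. ?x s * of_real (E s $ i $ k))" for i k
  proof -
    have "A $ i $ k = (\<Sum>s\<in>{0..d}. \<theta> s * E s $ i $ k)"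
      using assms unfolding is_spectral_decomposition_def
      by (simp add: sum_component)
    then show ?thesis by (simp add: itA_def sum_distrib_left algebra_simps)
  qed
  have "cmat_pow (itA t A) (Suc n) $ i $ j = (\<Sum>k\<in>UNIV. itA t A $ i $ k * cmat_pow (itA t A) n $ k $ j)"
    by (simp add: matrix_matrix_mult_def)
  also have "\<dots> = (\<Sum>k\<in>UNIV. (\<Sum>s\<in>{0..d}. ?x s * of_real (E s $ i $ k)) * (\<Sum>r\<in>{0..d}. ?x r ^ n * of_real (E r $ k $ j)))"
    by (simp add: Aik Suc.IH)
  also have "\<dots> = (\<Sum>k\<in>UNIV. \<Sum>s\<in>{0..d}. \<Sum>r\<in>{0..d}. ?x s * ?x r ^ n * (of_real (E s $ i $ k) * of_real (E r $ k $ j)))"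
    by (simp add: sum_product mult_ac)
  also have "\<dots> = (\<Sum>s\<in>{0..d}. \<Sum>k\<in>UNIV. \<Sum>r\<in>{0..d}. ?x s * ?x r ^ n * (of_real (E s $ i $ k) * of_real (E r $ k $ j)))"
    by (rule sum.swap)
  also have "\<dots> = (\<Sum>s\<in>{0..d}. \<Sum>r\<in>{0..d}. \<Sum>k\<in>UNIV. ?x s * ?x r ^ n * (of_real (E s $ i $ k) * of_real (E r $ k $ j)))"
    by (intro sum.cong refl, rule sum.swap)
  also have "\<dots> = (\<Sum>s\<in>{0..d}. \<Sum>r\<in>{0..d}. ?x s * ?x r ^ n * of_real (\<Sum>k\<in>UNIV. E s $ i $ k * E r $ k $ j))"
    by (simp only: sum_distrib_left of_real_sum of_real_mult)
  also have "\<dots> = (\<Sum>s\<in>{0..d}. \<Sum>r\<in>{0..d}. if s = r then ?x r ^ Suc n * of_real (E r $ i $ j) else 0)"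
    by (intro sum.cong refl) (simp add: orth)
  also have "\<dots> = (\<Sum>r\<in>{0..d}. ?x r ^ Suc n * of_real (E r $ i $ j))"
    by (simp add: sum.delta)
  finally show ?case .
qed



lemma exp_formula:
  assumes "is_spectral_decomposition A d \<theta> E"
  shows "cmat_exp (itA t A) $ a $ b = (\<Sum>r\<in>{0..d}. of_real (E r $ a $ b) * exp (\<i> * of_real (t * \<theta> r)))"
proof -
  let ?x = "\<lambda>r. \<i> * complex_of_real (t * \<theta> r)"
  have es: "(\<lambda>n. x^n / of_nat (fact n)) sums exp x" for x :: complex
    using exp_converges[of x] by (simp add: scaleR_conv_of_real divide_inverse mult.commute)
  have "(\<lambda>n. \<Sum>r\<in>{0..d}. ?x r ^ n / of_nat (fact n) * of_real (E r $ a $ b))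
          sums (\<Sum>r\<in>{0..d}. exp (?x r) * of_real (E r $ a $ b))"
    by (intro sums_sum sums_mult2 es)
  moreover have "(\<lambda>n. cmat_pow (itA t A) n $ a $ b / of_nat (fact n)) =
     (\<lambda>n. \<Sum>r\<in>{0..d}. ?x r ^ n / of_nat (fact n) * of_real (E r $ a $ b))"
    by (simp add: pow_formula[OF assms] sum_divide_distrib)
  ultimately have "(\<lambda>n. cmat_pow (itA t A) n $ a $ b / of_nat (fact n)) sums
       (\<Sum>r\<in>{0..d}. exp (?x r) * of_real (E r $ a $ b))" by simp
  then show ?thesis
    by (simp add: cmat_exp_def sums_iff mult.commute)
qed

lemma kron_indep:
  assumes "rat_lin_indep k w"
  shows "inj_on w {..<k}" "module.independent (\<lambda>r. (*) (real_of_int r)) (w ` {..<k})"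
proof -
  interpret Modules.module "(\<lambda>r. (*) (real_of_int r))"
    by (simp add: Modules.module.intro distrib_left mult.commute)
  show inj: "inj_on w {..<k}"
  proof (rule inj_onI, rule ccontr)
    fix i j assume ij: "i \<in> {..<k}" "j \<in> {..<k}" "w i = w j" "i \<noteq> j"
    define c :: "nat \<Rightarrow> rat" where "c = (\<lambda>l. if l = i then 1 else if l = j then -1 else 0)"
    have "(\<Sum>l<k. of_rat (c l) * w l) = (\<Sum>l<k. (if l = i then w i else 0) - (if l = j then w j else 0))"
      by (intro sum.cong refl) (auto simp: c_def ij)
    also have "\<dots> = 0" using ij by (simp add: sum_subtractf)
    finally have "\<forall>l<k. c l = 0" using assms unfolding rat_lin_indep_def by blast
    then have "c i = 0" using ij by simp
    then show False by (simp add: c_def)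
  qed
  show "independent (w ` {..<k})"
  proof
    assume "dependent (w ` {..<k})"
    then obtain T u v0 where T: "finite T" "T \<subseteq> w ` {..<k}" "(\<Sum>v\<in>T. real_of_int (u v) * v) = 0"
      and v0: "v0 \<in> T" "u v0 \<noteq> 0"
      unfolding dependent_explicit by blast
    define c :: "nat \<Rightarrow> rat" where "c = (\<lambda>l. if w l \<in> T then of_int (u (w l)) else 0)"
    let ?S = "{l\<in>{..<k}. w l \<in> T}"
    have img: "w ` ?S = T" using T(2) by auto
    have injS: "inj_on w ?S" using inj by (rule inj_on_subset) auto
    have "(\<Sum>l<k. of_rat (c l) * w l) = (\<Sum>l<k. if w l \<in> T then real_of_int (u (w l)) * w l else 0)"
      by (intro sum.cong refl) (simp add: c_def)
    also have "\<dots> = (\<Sum>l\<in>?S. real_of_int (u (w l)) * w l)"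
      by (rule sum.inter_filter[symmetric]) simp
    also have "\<dots> = (\<Sum>v\<in>T. real_of_int (u v) * v)"
      using sum.reindex[OF injS, of "\<lambda>v. real_of_int (u v) * v"] img by simp
    also have "\<dots> = 0" by (rule T(3))
    finally have "\<forall>l<k. c l = 0" using assms unfolding rat_lin_indep_def by blast
    moreover obtain l0 where "l0 < k" "w l0 = v0" using T(2) v0(1) by auto
    ultimately show False using v0 by (auto simp: c_def)
  qed
qed



lemma exp_per: "exp (\<i> * complex_of_real (y + of_int N * (pi * 2))) = exp (\<i> * complex_of_real y)"
proof -
  have e: "\<i> * complex_of_real (y + of_int N * (pi * 2)) = \<i> * complex_of_real y + \<i> * (of_int N * (of_real pi * 2))"
    by (simp add: algebra_simps)
  show ?thesis by (simp only: e exp_plus_2pin)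
qed

theorem proposition5p1:
  fixes A :: "real^'n^'n" and a b :: 'n
    and d :: nat and \<theta> :: "nat \<Rightarrow> real" and E :: "nat \<Rightarrow> real^'n^'n"
    and k :: nat and w :: "nat \<Rightarrow> real" and f :: "nat \<Rightarrow> nat \<Rightarrow> int"
    and F :: "(nat \<Rightarrow> real) \<Rightarrow> complex"
  assumes "is_adjacency_matrix A"
    and "is_spectral_decomposition A d \<theta> E"
    and "rat_lin_indep k w"
    and "\<forall>r\<in>{0..d}. \<theta> r = (\<Sum>l<k. of_int (f r l) * w l)"
    and "\<And>z. F z = (\<Sum>r\<in>{0..d}. complex_of_real (E r $ a $ b) *
                         exp (\<i> * complex_of_real (\<Sum>l<k. of_int (f r l) * z l)))"
  shows "(\<lambda>m. root m ((1 / (2 * pi) ^ k) *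
            (LINT z : (\<Pi>\<^sub>E l\<in>{..<k}. {0..<2 * pi}) | PiM {..<k} (\<lambda>_. lborel). cmod (F z) ^ m)))
         \<longlonglongrightarrow> (SUP t\<in>{0..}. cmod (cmat_exp (itA t A) $ a $ b))"
proof -
  define e where "e r = E r $ a $ b" for r
  define G where "G t = (\<Sum>r\<in>{0..d}. complex_of_real (e r) * exp (\<i> * of_real (t * \<theta> r)))" for t
  have gG: "cmat_exp (itA t A) $ a $ b = G t" for t
    unfolding G_def e_def by (rule exp_formula[OF assms(2)])
  define S where "S = (SUP t\<in>{0..}. cmod (G t))"
  define B where "B = (\<Sum>r\<in>{0..d}. \<bar>e r\<bar>)"
  have Gb: "cmod (G t) \<le> B" for t
  proof -
    have "cmod (G t) \<le> (\<Sum>r\<in>{0..d}. cmod (complex_of_real (e r) * exp (\<i> * of_real (t * \<theta> r))))"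
      unfolding G_def by (rule norm_sum)
    also have "\<dots> = B" unfolding B_def by (simp add: norm_mult)
    finally show ?thesis .
  qed
  have bdd: "bdd_above ((\<lambda>t. cmod (G t)) ` {0..})"
    using Gb by (intro bdd_aboveI2) auto
  have Gneg: "G (- t) = cnj (G t)" for t
    unfolding G_def by (simp add: exp_cnj)
  have Sge: "cmod (G t) \<le> S" for t
  proof (cases "t \<ge> 0")
    case True then show ?thesis unfolding S_def by (intro cSUP_upper bdd) auto
  next
    case False
    have "cmod (G t) = cmod (G (- t))" by (simp add: Gneg)
    also have "\<dots> \<le> S" unfolding S_def using False by (intro cSUP_upper bdd) auto
    finally show ?thesis .
  qed
  have S0: "0 \<le> S" using Sge[of 0] norm_ge_zero order_trans by blast
  have FG: "F (\<lambda>l. t * w l) = G t" for t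
  proof -
    have "(\<Sum>l<k. of_int (f r l) * (t * w l)) = t * \<theta> r" if "r \<in> {0..d}" for r
      using assms(4) that by (simp add: sum_distrib_left mult_ac)
    then show ?thesis unfolding assms(5) G_def e_def by (intro sum.cong refl) simp
  qed
  have per: "F z = F z'" if "\<And>l. l < k \<Longrightarrow> z l = z' l + 2 * pi * of_int (h l)" for z z' h
  proof -
    have "exp (\<i> * complex_of_real (\<Sum>l<k. of_int (f r l) * z l)) =
          exp (\<i> * complex_of_real (\<Sum>l<k. of_int (f r l) * z' l))" for r
    proof -
      have "(\<Sum>l<k. of_int (f r l) * z l) = (\<Sum>l<k. of_int (f r l) * z' l + of_int (f r l * h l) * (pi * 2))"
        by (intro sum.cong refl) (simp add: that algebra_simps)
      also have "\<dots> = (\<Sum>l<k. of_int (f r l) * z' l) + of_int (\<Sum>l<k. f r l * h l) * (pi * 2)"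
        by (simp add: sum.distrib sum_distrib_right)
      finally have eqX: "(\<Sum>l<k. of_int (f r l) * z l) = (\<Sum>l<k. of_int (f r l) * z' l) + of_int (\<Sum>l<k. f r l * h l) * (pi * 2)" .
      show ?thesis by (simp only: eqX exp_per)
    qed
    then show ?thesis unfolding assms(5) by simp
  qed
  define L where "L = (\<Sum>r\<in>{0..d}. \<bar>e r\<bar> * (\<Sum>l<k. \<bar>real_of_int (f r l)\<bar>))"
  have L0: "0 \<le> L" unfolding L_def by (intro sum_nonneg mult_nonneg_nonneg) auto
  have lip: "cmod (F z - F z') \<le> L * \<delta>" if "\<And>l. l < k \<Longrightarrow> \<bar>z l - z' l\<bar> \<le> \<delta>" for z z' \<delta>
  proof -
    let ?X = "\<lambda>z r. (\<Sum>l<k. of_int (f r l) * z l)"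
    have d1: "\<bar>?X z r - ?X z' r\<bar> \<le> (\<Sum>l<k. \<bar>real_of_int (f r l)\<bar>) * \<delta>" for r
    proof -
      have "\<bar>?X z r - ?X z' r\<bar> = \<bar>\<Sum>l<k. of_int (f r l) * (z l - z' l)\<bar>"
        by (simp add: sum_subtractf algebra_simps)
      also have "\<dots> \<le> (\<Sum>l<k. \<bar>of_int (f r l) * (z l - z' l)\<bar>)" by (rule sum_abs)
      also have "\<dots> \<le> (\<Sum>l<k. \<bar>real_of_int (f r l)\<bar> * \<delta>)"
        by (intro sum_mono) (simp add: abs_mult mult_left_mono that)
      finally show ?thesis by (simp add: sum_distrib_right)
    qed
    have "F z - F z' = (\<Sum>r\<in>{0..d}. of_real (e r) * (exp (\<i> * of_real (?X z r)) - exp (\<i> * of_real (?X z' r))))"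
      unfolding assms(5) e_def by (simp add: sum_subtractf right_diff_distrib)
    hence "cmod (F z - F z') = cmod (\<Sum>r\<in>{0..d}. of_real (e r) * (exp (\<i> * of_real (?X z r)) - exp (\<i> * of_real (?X z' r))))"
      by simp
    also have "\<dots> \<le> (\<Sum>r\<in>{0..d}. cmod (of_real (e r) * (exp (\<i> * of_real (?X z r)) - exp (\<i> * of_real (?X z' r)))))"
      by (rule norm_sum)
    also have "\<dots> \<le> (\<Sum>r\<in>{0..d}. \<bar>e r\<bar> * ((\<Sum>l<k. \<bar>real_of_int (f r l)\<bar>) * \<delta>))"
    proof (intro sum_mono)
      fix r
      have "cmod (exp (\<i> * of_real (?X z r)) - exp (\<i> * of_real (?X z' r))) \<le> (\<Sum>l<k. \<bar>real_of_int (f r l)\<bar>) * \<delta>"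
        using exp_lip d1 order_trans by blast
      then show "cmod (of_real (e r) * (exp (\<i> * of_real (?X z r)) - exp (\<i> * of_real (?X z' r)))) \<le> \<bar>e r\<bar> * ((\<Sum>l<k. \<bar>real_of_int (f r l)\<bar>) * \<delta>)"
        by (simp add: norm_mult mult_left_mono)
    qed
    also have "\<dots> = L * \<delta>" by (simp only: L_def sum_distrib_right mult.assoc)
    finally show ?thesis .
  qed
  have U: "cmod (F z) \<le> S" for z
  proof (rule ccontr)
    assume nz: "\<not> cmod (F z) \<le> S"
    define \<eta> where "\<eta> = cmod (F z) - S"
    have \<eta>0: "\<eta> > 0" using nz by (simp add: \<eta>_def)
    define \<epsilon>' where "\<epsilon>' = \<eta> / (2*pi*(L+1))"
    have \<epsilon>'0: "\<epsilon>' > 0" using \<eta>0 L0 by (simp add: \<epsilon>'_def)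
    obtain t h where th: "\<And>i. i < k \<Longrightarrow> \<bar>t * w i - of_int (h i) - z i / (2*pi)\<bar> < \<epsilon>'"
      using Kronecker_thm_1[where \<alpha>="\<lambda>i. z i / (2*pi)", OF kron_indep(2)[OF assms(3)] kron_indep(1)[OF assms(3)] \<epsilon>'0]
      by blast
    define z' where "z' = (\<lambda>l. (2*pi*t) * w l - 2*pi* of_int (h l))"
    have "F z' = F (\<lambda>l. (2*pi*t) * w l)" by (rule per[where h="\<lambda>l. - h l"]) (simp add: z'_def)
    also have "\<dots> = G (2*pi*t)" by (rule FG)
    finally have Fz': "cmod (F z') \<le> S" using Sge by simp
    have close: "\<bar>z l - z' l\<bar> \<le> 2*pi*\<epsilon>'" if "l < k" for l
    proof -
      have "z l - z' l = - (2*pi) * (t * w l - of_int (h l) - z l / (2*pi))" by (simp add: z'_def field_simps)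
      hence "\<bar>z l - z' l\<bar> = 2*pi * \<bar>t * w l - of_int (h l) - z l / (2*pi)\<bar>" by (simp add: abs_mult)
      also have "\<dots> \<le> 2*pi*\<epsilon>'" using th[OF that] by (intro mult_left_mono) auto
      finally show ?thesis .
    qed
    have "cmod (F z - F z') \<le> L * (2*pi*\<epsilon>')" by (rule lip) (rule close)
    also have "L * (2*pi*\<epsilon>') = \<eta> * (L / (L+1))"
    proof -
      have Lp: "L + 1 > 0" using L0 by simp
      have pos: "2*pi*(L+1) > 0" using Lp by simp
      have e': "\<epsilon>' * (2*pi*(L+1)) = \<eta>" using pos Lp unfolding \<epsilon>'_def by simp
      have Ln: "L + 1 \<noteq> 0" "1 + L \<noteq> 0" using Lp by auto
      have "\<eta> * (L / (L+1)) = (\<epsilon>' * (2*pi) * L) * ((L+1) / (L+1))"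
        unfolding e'[symmetric] by (simp only: times_divide_eq_right mult_ac)
      also have "(L+1) / (L+1) = 1" using Ln by simp
      finally show ?thesis by (simp add: mult_ac)
    qed
    also have "\<dots> < \<eta>" using \<eta>0 L0 by (simp add: field_simps)
    finally have "cmod (F z - F z') < \<eta>" .
    moreover have "cmod (F z) \<le> cmod (F z') + cmod (F z - F z')" by (rule norm_triangle_sub)
    ultimately show False using Fz' by (simp add: \<eta>_def)
  qed
  have Low: "\<exists>c \<delta>. 0 < \<delta> \<and> (\<forall>l<k. 0 \<le> c l \<and> c l + \<delta> \<le> 2*pi) \<and>
       (\<forall>z. (\<forall>l<k. c l \<le> z l \<and> z l < c l + \<delta>) \<longrightarrow> S - \<epsilon> \<le> cmod (F z))" if "\<epsilon> > 0" for \<epsilon>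
  proof -
    have "S - \<epsilon>/2 < (SUP t\<in>{0..}. cmod (G t))" using that S_def by simp
    then obtain t where "t \<ge> 0" and tS: "S - \<epsilon>/2 < cmod (G t)"
      by (auto simp: less_cSUP_iff[OF _ bdd])
    define z0 where "z0 = (\<lambda>l. t * w l - 2*pi* of_int \<lfloor>t * w l / (2*pi)\<rfloor>)"
    have z0r: "0 \<le> z0 l \<and> z0 l < 2*pi" for l
    proof -
      have "z0 l = 2*pi * frac (t * w l / (2*pi))" by (simp add: z0_def frac_def field_simps)
      then show ?thesis using frac_ge_0 frac_lt_1 by (simp add: mult_less_cancel_left)
    qed
    have "F z0 = F (\<lambda>l. t * w l)" by (rule per[where h="\<lambda>l. - \<lfloor>t * w l / (2*pi)\<rfloor>"]) (simp add: z0_def)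
    hence Fz0: "S - \<epsilon>/2 < cmod (F z0)" using FG tS by simp
    define \<delta> where "\<delta> = min pi (\<epsilon> / (2*(L+1)))"
    have \<delta>0: "\<delta> > 0" using that L0 by (simp add: \<delta>_def)
    have \<delta>pi: "\<delta> \<le> pi" by (simp add: \<delta>_def)
    have L\<delta>: "L * \<delta> \<le> \<epsilon>/2"
    proof -
      have "L * \<delta> \<le> L * (\<epsilon> / (2*(L+1)))" using L0 by (intro mult_left_mono) (auto simp: \<delta>_def)
      also have "\<dots> = (\<epsilon>/2) * (L/(L+1))" using L0 by (simp add: field_simps)
      also have "\<dots> \<le> \<epsilon>/2" using L0 that by (intro mult_left_le) auto
      finally show ?thesis .
    qed
    define c where "c l = min (z0 l) (2*pi - \<delta>)" for l
    show ?thesis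
    proof (intro exI conjI allI impI)
      show "0 < \<delta>" by (rule \<delta>0)
      fix l assume "l < k"
      show "0 \<le> c l" using z0r[of l] \<delta>pi pi_gt_zero by (simp add: c_def)
      show "c l + \<delta> \<le> 2*pi" by (simp add: c_def)
    next
      fix z assume H: "\<forall>l<k. c l \<le> z l \<and> z l < c l + \<delta>"
      have "\<bar>z l - z0 l\<bar> \<le> \<delta>" if "l < k" for l
      proof -
        have "c l \<le> z l" "z l < c l + \<delta>" using H that by auto
        then show ?thesis using z0r[of l] by (auto simp: c_def min_def abs_if split: if_splits)
      qed
      then have "cmod (F z - F z0) \<le> L * \<delta>" by (rule lip)
      moreover have "cmod (F z0) - cmod (F z) \<le> cmod (F z - F z0)"
        using norm_triangle_ineq2[of "F z0" "F z"] by (simp add: norm_minus_commute)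
      ultimately show "S - \<epsilon> \<le> cmod (F z)" using Fz0 L\<delta> by simp
    qed
  qed
  define M where "M = PiM {..<k} (\<lambda>_::nat. lborel :: real measure)"
  define X where "X = (\<Pi>\<^sub>E l\<in>{..<k}. {0..<2*pi::real})"
  have measX: "emeasure M X = ennreal ((2*pi)^k)"
    using box_measure[of "2*pi" k "\<lambda>_. 0"] by (simp add: M_def X_def)
  have Xs: "X \<in> sets M" unfolding M_def X_def by (rule sets_PiM_I_finite) auto
  have mX: "measure M X = (2*pi)^k" using measX by (intro measure_eq_emeasure_eq_ennreal) auto
  have XsM: "X \<inter> space M = X" using Xs sets.sets_into_space by blast
  have comp: "(\<lambda>z. z l) \<in> borel_measurable M" if "l < k" for l
    using measurable_component_singleton[of l "{..<k}" "\<lambda>_. lborel"] that by (simp add: M_def)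
  have inner: "(\<lambda>z. \<Sum>l<k. of_int (f r l) * z l) \<in> borel_measurable M" for r
    by (rule borel_measurable_sum) (auto intro!: borel_measurable_times comp)
  have Fm: "F \<in> borel_measurable M"
  proof -
    have "(\<lambda>z. \<Sum>r\<in>{0..d}. complex_of_real (E r $ a $ b) *
                         exp (\<i> * complex_of_real (\<Sum>l<k. of_int (f r l) * z l))) \<in> borel_measurable M"
    proof (rule borel_measurable_sum)
      fix r
      show "(\<lambda>z. complex_of_real (E r $ a $ b) *
                         exp (\<i> * complex_of_real (\<Sum>l<k. of_int (f r l) * z l))) \<in> borel_measurable M"
        using inner[of r] by measurable
    qed
    moreover have "F = (\<lambda>z. \<Sum>r\<in>{0..d}. complex_of_real (E r $ a $ b) *
                         exp (\<i> * complex_of_real (\<Sum>l<k. of_int (f r l) * z l)))"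
      using assms(5) by blast
    ultimately show ?thesis by simp
  qed
  define I where "I m = (LINT z:X|M. cmod (F z) ^ m)" for m
  have integ: "integrable M (\<lambda>z. indicator X z *\<^sub>R (cmod (F z))^m)" for m
  proof (rule integrableI_bounded_set_indicator[where B="S^m"])
    show "X \<in> sets M" by (rule Xs)
    show "(\<lambda>z. cmod (F z) ^ m) \<in> borel_measurable M" using Fm by measurable
    show "emeasure M X < \<infinity>" using measX by simp
    show "AE x in M. x \<in> X \<longrightarrow> norm (cmod (F x) ^ m) \<le> S ^ m"
      using U by (intro AE_I2) (simp add: power_mono)
  qed
  have Inn: "0 \<le> I m" for m unfolding I_def set_lebesgue_integral_def by (rule Bochner_Integration.integral_nonneg) simp
  have upper: "I m \<le> (2*pi)^k * S^m" for m
  proof -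
    have "I m = integral\<^sup>L M (\<lambda>z. indicator X z *\<^sub>R (cmod (F z))^m)"
      unfolding I_def set_lebesgue_integral_def by simp
    also have "\<dots> \<le> integral\<^sup>L M (\<lambda>z. indicator X z * S^m)"
      by (intro integral_mono integ integrable_mult_left integrable_real_indicator Xs)
         (auto simp: measX indicator_def U power_mono)
    also have "\<dots> = (2*pi)^k * S^m" by (simp add: XsM mX)
    finally show ?thesis .
  qed
  have lower: "\<delta>^k * (S - \<epsilon>)^m \<le> I m"
    if "0 < \<delta>" "\<forall>l<k. 0 \<le> c l \<and> c l + \<delta> \<le> 2*pi"
       "\<forall>z. (\<forall>l<k. c l \<le> z l \<and> z l < c l + \<delta>) \<longrightarrow> S - \<epsilon> \<le> cmod (F z)"
       "0 \<le> S - \<epsilon>" for \<delta> c \<epsilon> m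
  proof -
    define Y where "Y = (\<Pi>\<^sub>E l\<in>{..<k}. {c l..<c l + \<delta>})"
    have measY: "emeasure M Y = ennreal (\<delta>^k)"
      using box_measure[of \<delta> k c] that(1) by (simp add: M_def Y_def)
    have Ys: "Y \<in> sets M" unfolding M_def Y_def by (rule sets_PiM_I_finite) auto
    have mY: "measure M Y = \<delta>^k" using measY that(1) by (intro measure_eq_emeasure_eq_ennreal) auto
    have YsM: "Y \<inter> space M = Y" using Ys sets.sets_into_space by blast
    have YX: "z \<in> X" if "z \<in> Y" for z
    proof -
      have z1: "\<forall>l\<in>{..<k}. z l \<in> {c l..<c l + \<delta>}" "z \<in> extensional {..<k}"
        using that unfolding Y_def PiE_iff by auto
      have "\<forall>l\<in>{..<k}. z l \<in> {0..<2*pi}"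
      proof
        fix l assume l: "l \<in> {..<k}"
        then have "c l \<le> z l" "z l < c l + \<delta>" using z1 by auto
        moreover have "0 \<le> c l" "c l + \<delta> \<le> 2*pi" using l \<open>\<forall>l<k. 0 \<le> c l \<and> c l + \<delta> \<le> 2*pi\<close> by auto
        ultimately show "z l \<in> {0..<2*pi}" by simp
      qed
      then show ?thesis using z1(2) unfolding X_def PiE_iff by blast
    qed
    have YF: "S - \<epsilon> \<le> cmod (F z)" if "z \<in> Y" for z
      using that \<open>\<forall>z. _ \<longrightarrow> S - \<epsilon> \<le> cmod (F z)\<close> unfolding Y_def by (auto simp: PiE_iff)
    have "\<delta>^k * (S - \<epsilon>)^m = integral\<^sup>L M (\<lambda>z. indicator Y z * (S - \<epsilon>)^m)"
      by (simp add: YsM mY)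
    also have "\<dots> \<le> integral\<^sup>L M (\<lambda>z. indicator X z *\<^sub>R (cmod (F z))^m)"
    proof (intro integral_mono integ integrable_mult_left integrable_real_indicator Ys)
      show "emeasure M Y < \<infinity>" using measY by simp
      fix z assume "z \<in> space M"
      show "indicator Y z * (S - \<epsilon>) ^ m \<le> indicator X z *\<^sub>R cmod (F z) ^ m"
      proof (cases "z \<in> Y")
        case True
        then show ?thesis using YX YF \<open>0 \<le> S - \<epsilon>\<close> by (simp add: power_mono)
      next
        case False
        then show ?thesis by (simp add: indicator_def)
      qed
    qed
    also have "\<dots> = I m" unfolding I_def set_lebesgue_integral_def by simp
    finally show ?thesis .
  qed
  have goalS: "(SUP t\<in>{0..}. cmod (cmat_exp (itA t A) $ a $ b)) = S" by (simp add: gG S_def)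
  have goalI: "(LINT z : (\<Pi>\<^sub>E l\<in>{..<k}. {0..<2 * pi}) | PiM {..<k} (\<lambda>_. lborel). cmod (F z) ^ m) = I m" for m
    by (simp add: I_def M_def X_def)
  have p: "(2*pi)^k > (0::real)" by simp
  show ?thesis unfolding goalS goalI
  proof (rule order_tendstoI)
    fix y assume "y < S"
    show "eventually (\<lambda>m. y < root m (1 / (2*pi)^k * I m)) sequentially"
    proof (cases "y < 0")
      case True
      have "0 \<le> root m (1 / (2*pi)^k * I m)" for m
        by (intro real_root_ge_zero mult_nonneg_nonneg Inn) simp
      then show ?thesis using True by (intro always_eventually allI) (meson le_less_trans not_le)
    next
      case False
      define \<epsilon> where "\<epsilon> = (S - y)/2"
      have \<epsilon>0: "\<epsilon> > 0" using \<open>y < S\<close> by (simp add: \<epsilon>_def)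
      obtain c \<delta> where d0: "0 < \<delta>" and cb: "\<forall>l<k. 0 \<le> c l \<and> c l + \<delta> \<le> 2*pi"
        and cF: "\<forall>z. (\<forall>l<k. c l \<le> z l \<and> z l < c l + \<delta>) \<longrightarrow> S - \<epsilon> \<le> cmod (F z)"
        using Low[OF \<epsilon>0] by blast
      have S\<epsilon>: "0 \<le> S - \<epsilon>" "y < S - \<epsilon>" using False \<open>y < S\<close> unfolding \<epsilon>_def by (simp_all add: field_simps)
      define q where "q = \<delta>^k / (2*pi)^k"
      have q0: "q > 0" using d0 by (simp add: q_def)
      have "(\<lambda>m. root m q * (S - \<epsilon>)) \<longlonglongrightarrow> 1 * (S - \<epsilon>)"
        by (intro tendsto_mult LIMSEQ_root_const q0 tendsto_const)
      hence ev1: "eventually (\<lambda>m. y < root m q * (S - \<epsilon>)) sequentially"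
        using S\<epsilon> by (intro order_tendstoD(1)) simp_all
      show ?thesis using ev1 eventually_gt_at_top[of 0]
      proof eventually_elim
        case (elim m)
        have "q * (S - \<epsilon>)^m = (\<delta>^k * (S - \<epsilon>)^m) / (2*pi)^k" by (simp add: q_def)
        also have "\<dots> \<le> I m / (2*pi)^k"
          by (rule divide_right_mono[OF lower[OF d0 cb cF S\<epsilon>(1)]]) simp
        also have "\<dots> = 1 / (2*pi)^k * I m" by simp
        finally have "root m (q * (S - \<epsilon>)^m) \<le> root m (1 / (2*pi)^k * I m)"
          by (rule real_root_le_mono[OF elim(2)])
        moreover have "root m (q * (S - \<epsilon>)^m) = root m q * (S - \<epsilon>)"
          using elim S\<epsilon> by (simp add: real_root_mult real_root_power_cancel)
        ultimately show ?case using elim(1) by simp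
      qed
    qed
  next
    fix y assume "S < y"
    show "eventually (\<lambda>m. root m (1 / (2*pi)^k * I m) < y) sequentially"
      using eventually_gt_at_top[of 0]
    proof eventually_elim
      case (elim m)
      have "I m / (2*pi)^k \<le> S^m" using upper[of m] p by (simp add: pos_divide_le_eq mult.commute)
      hence "1 / (2*pi)^k * I m \<le> S^m" by simp
      hence "root m (1 / (2*pi)^k * I m) \<le> root m (S^m)" by (rule real_root_le_mono[OF elim])
      also have "\<dots> = S" using elim S0 by (simp add: real_root_power_cancel)
      finally show ?case using \<open>S < y\<close> by simp
    qed
  qed
qed

end
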